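(* Let $n_1,n_2,n_3\in\mathbb{N}$, let $\sigma$ be a segment label map on $G=\{1,\dots,n_1\}\times\{1,\dots,n_2\}\times\{1,\dots,n_3\}$, fix any decomposition of $T$ into blocks, let $\tau=\mathrm{LABEL}(\sigma,T)$ and let $\tau'$ be the output of the block-wise method. Then for all 1-cells $u,v\in T$: $\tau'(u)=\tau'(v)\Rightarrow\tau(u)=\tau(v)$.
   Context: Voxel grid and segmentation: $G=\{1,\dots,n_1\}\times\{1,\dots,n_2\}\times\{1,\dots,n_3\}$; voxels $v,w$ are adjacent iff $\sum_i|v_i-w_i|=1$. A segment label map is $\sigma:G\to\mathbb{N}=\{1,2,\dots\}$ such that each level set $\sigma^{-1}(l)$ is connected w.r.t. this adjacency. Topological grid: $T=\{1,\dots,2n_1-1\}\times\{1,\dots,2n_2-1\}\times\{1,\dots,2n_3-1\}$; a cell with exactly $j$ odd coordinates is a $j$-cell. Voxel $r$ corresponds to the 3-cell $2r-1$. Two cells are 6-neighbors if they differ by $1$ in exactly one coordinate. For a $j$-cell $t$, $\Gamma(t)$ is the set of 6-neighbors of $t$ in $T$ that are $(j+1)$-cells. Cells $t_1,t_2$ are connected, $t_1\leftrightarrow t_2$, iff there is $t\in T$ with $t_1,t_2\in\Gamma(t)$. Procedure LABEL: for a voxel box $\prod_i\{a_i,\dots,b_i\}\subseteq G$ let $B=\prod_i\{2a_i-1,\dots,2b_i-1\}$ be its cell box. $\mathrm{LABEL}(\sigma,B)$ produces $\lambda:B\to\mathbb{N}_0$: (1) $\lambda(2r-1)=\sigma(r)$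 for 3-cells. (2) For $j=2,1,0$ in this order: for each $j$-cell $t\in B$ let $\theta(t)$ be the set of positive integers occurring exactly once in $(\lambda(s))_{s\in\Gamma(t)}$; $t$ is active iff $\theta(t)\ne\emptyset$, inactive $j$-cells get label $0$; the active $j$-cells of $B$ are partitioned into maximal sets of cells with equal $\theta$ that are connected by $\leftrightarrow$-paths inside the set; these classes are numbered $1,\dots,m_j(B)$ arbitrarily and each active $j$-cell gets its class number. Reference labeling: $\tau=\mathrm{LABEL}(\sigma,T)$. Block-wise method: for each axis $i$ choose odd integers $1=a^i_0<\dots<a^i_{m_i}=2n_i-1$; blocks are the boxes $\prod_i\{a^i_{k_i-1},\dots,a^i_{k_i}\}$. Step 1: $\lambda_B=\mathrm{LABEL}(\sigma,B)$ for each block. Step 2: with blocks ordered $B_1,\dots,B_K$, add offset $\sum_{k'<k}m_j(B_{k'})$ to each positive $j$-cell label of $\lambda_{B_k}$ ($j\in\{0,1,2\}$). Step 3: for $j\in\{1,2\}$, via union–find, unite the labels received in different blocks by any active $j$-cell lying in several blocks, and replace every positive $j$-cell label by its set representative. Step 4: for each 0-cell $t_0$ and each pair of distinct 1-cell labels occurring exactly once among the current labels of $\Gamma(t_0)$, merge the two labels if the corresponding 1-cells bound the same set of current 2-cell labels; if any merge took place at $t_0$, recompute the activity of $t_0$ and set its label to $0$ if inactive. The result is $\tau':T\to\mathbb{N}_0$. *)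

theory Defs
  imports Main
begin

type_synonym cell = "int \<times> int \<times> int"

definition grid :: "nat \<Rightarrow> nat \<Rightarrow> nat \<Rightarrow> cell set" where
  "grid n1 n2 n3 = {1..int n1} \<times> {1..int n2} \<times> {1..int n3}"

definition tgrid :: "nat \<Rightarrow> nat \<Rightarrow> nat \<Rightarrow> cell set" where
  "tgrid n1 n2 n3 = {1..2 * int n1 - 1} \<times> {1..2 * int n2 - 1} \<times> {1..2 * int n3 - 1}"

definition l1dist :: "cell \<Rightarrow> cell \<Rightarrow> int" where
  "l1dist v w = (case v of (a1, a2, a3) \<Rightarrow> case w of (b1, b2, b3) \<Rightarrow>
      \<bar>a1 - b1\<bar> + \<bar>a2 - b2\<bar> + \<bar>a3 - b3\<bar>)"

definition voxel_adj :: "cell \<Rightarrow> cell \<Rightarrow> bool" where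
  "voxel_adj v w = (l1dist v w = 1)"

definition segment_label_map :: "cell set \<Rightarrow> (cell \<Rightarrow> nat) \<Rightarrow> bool" where
  "segment_label_map G \<sigma> =
     ((\<forall>v\<in>G. 1 \<le> \<sigma> v) \<and>
      (\<forall>v\<in>G. \<forall>w\<in>G. \<sigma> v = \<sigma> w \<longrightarrow>
         (\<lambda>x y. x \<in> G \<and> y \<in> G \<and> \<sigma> x = \<sigma> v \<and> \<sigma> y = \<sigma> v \<and> voxel_adj x y)\<^sup>*\<^sup>* v w))"

text \<open>Number of odd coordinates: a cell with j odd coordinates is a j-cell.\<close>
definition dim_cell :: "cell \<Rightarrow> nat" where
  "dim_cell t = (case t of (a, b, c) \<Rightarrow>
     (if odd a then 1 else 0) + (if odd b then 1 else 0) + (if odd c then 1 else 0))"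

definition six_nbr :: "cell \<Rightarrow> cell \<Rightarrow> bool" where
  "six_nbr s t = (l1dist s t = 1)"

definition Gamma :: "cell set \<Rightarrow> cell \<Rightarrow> cell set" where
  "Gamma T t = {s \<in> T. six_nbr t s \<and> dim_cell s = dim_cell t + 1}"

definition cell_conn :: "cell set \<Rightarrow> cell \<Rightarrow> cell \<Rightarrow> bool" where
  "cell_conn T t1 t2 = (\<exists>t\<in>T. t1 \<in> Gamma T t \<and> t2 \<in> Gamma T t)"

text \<open>Voxel r corresponds to the 3-cell 2r-1.\<close>
definition voxel_of :: "cell \<Rightarrow> cell" where
  "voxel_of t = (case t of (a, b, c) \<Rightarrow> ((a + 1) div 2, (b + 1) div 2, (c + 1) div 2))"

section \<open>Procedure LABEL (as a relation: numbering of classes is arbitrary)\<close>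

definition theta :: "cell set \<Rightarrow> (cell \<Rightarrow> nat) \<Rightarrow> cell \<Rightarrow> nat set" where
  "theta T lam t = {l. 0 < l \<and> card {s \<in> Gamma T t. lam s = l} = 1}"

definition active_cells :: "cell set \<Rightarrow> (cell \<Rightarrow> nat) \<Rightarrow> cell set \<Rightarrow> nat \<Rightarrow> cell set" where
  "active_cells T lam B j = {t \<in> B. dim_cell t = j \<and> theta T lam t \<noteq> {}}"

definition same_class :: "cell set \<Rightarrow> (cell \<Rightarrow> nat) \<Rightarrow> cell set \<Rightarrow> nat \<Rightarrow> cell \<Rightarrow> cell \<Rightarrow> bool" where
  "same_class T lam B j t t' =
     (t \<in> active_cells T lam B j \<and> t' \<in> active_cells T lam B j \<and>
      theta T lam t = theta T lam t' \<and>
      (\<lambda>x y. x \<in> active_cells T lam B j \<and> y \<in> active_cells T lam B j \<and>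
             theta T lam x = theta T lam t \<and> theta T lam y = theta T lam t \<and>
             cell_conn T x y)\<^sup>*\<^sup>* t t')"

text \<open>is_LABEL T sigma B lam: lam is a possible output of LABEL(sigma, B) (on B), where
  T is the full topological grid.\<close>
definition is_LABEL :: "cell set \<Rightarrow> (cell \<Rightarrow> nat) \<Rightarrow> cell set \<Rightarrow> (cell \<Rightarrow> nat) \<Rightarrow> bool" where
  "is_LABEL T \<sigma> B lam =
     ((\<forall>t\<in>B. dim_cell t = 3 \<longrightarrow> lam t = \<sigma> (voxel_of t)) \<and>
      (\<forall>j\<in>{0, 1, 2}.
         (\<forall>t\<in>B. dim_cell t = j \<and> theta T lam t = {} \<longrightarrow> lam t = 0) \<and>
         lam ` active_cells T lam B j = {1..card (lam ` active_cells T lam B j)} \<and>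
         (\<forall>t\<in>active_cells T lam B j. \<forall>t'\<in>active_cells T lam B j.
             lam t = lam t' \<longleftrightarrow> same_class T lam B j t t')))"

definition num_classes :: "cell set \<Rightarrow> (cell \<Rightarrow> nat) \<Rightarrow> cell set \<Rightarrow> nat \<Rightarrow> nat" where
  "num_classes T lam B j = card (lam ` active_cells T lam B j)"

definition valid_cuts :: "int \<Rightarrow> int list \<Rightarrow> bool" where
  "valid_cuts N cs = (sorted_wrt (<) cs \<and> 2 \<le> length cs \<and> hd cs = 1 \<and> last cs = N \<and>
                      (\<forall>a\<in>set cs. odd a))"

definition block_family :: "int list \<Rightarrow> int list \<Rightarrow> int list \<Rightarrow> cell set set" where
  "block_family c1 c2 c3 =
     {{c1 ! (k1 - 1) .. c1 ! k1} \<times> {c2 ! (k2 - 1) .. c2 ! k2} \<times> {c3 ! (k3 - 1) .. c3 ! k3} | k1 k2 k3.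
        0 < k1 \<and> k1 < length c1 \<and> 0 < k2 \<and> k2 < length c2 \<and> 0 < k3 \<and> k3 < length c3}"

definition offset :: "cell set \<Rightarrow> (nat \<Rightarrow> cell \<Rightarrow> nat) \<Rightarrow> cell set list \<Rightarrow> nat \<Rightarrow> nat \<Rightarrow> nat" where
  "offset T lams Bs j k = (\<Sum>k'<k. num_classes T (lams k') (Bs ! k') j)"

definition lab2 :: "cell set \<Rightarrow> (nat \<Rightarrow> cell \<Rightarrow> nat) \<Rightarrow> cell set list \<Rightarrow> nat \<Rightarrow> cell \<Rightarrow> nat" where
  "lab2 T lams Bs k t = (if 0 < lams k t then lams k t + offset T lams Bs (dim_cell t) k else 0)"

text \<open>Step 3: union-find over labels received by the same j-cell in different blocks.\<close>
definition uf_rel :: "cell set \<Rightarrow> (nat \<Rightarrow> cell \<Rightarrow> nat) \<Rightarrow> cell set list \<Rightarrow> nat \<Rightarrow> (nat \<times> nat) set" where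
  "uf_rel T lams Bs j =
     {(lab2 T lams Bs k t, lab2 T lams Bs k' t) | k k' t.
        k < length Bs \<and> k' < length Bs \<and> t \<in> Bs ! k \<and> t \<in> Bs ! k' \<and> dim_cell t = j \<and>
        0 < lams k t \<and> 0 < lams k' t}"

definition equiv_closure :: "(nat \<times> nat) set \<Rightarrow> (nat \<times> nat) set" where
  "equiv_closure R = (R \<union> R\<inverse>)\<^sup>*"

definition is_set_rep :: "(nat \<times> nat) set \<Rightarrow> (nat \<Rightarrow> nat) \<Rightarrow> bool" where
  "is_set_rep E r = (\<forall>x. (x, r x) \<in> E \<and> (\<forall>y. (x, y) \<in> E \<longrightarrow> r y = r x))"

definition lab3 :: "cell set \<Rightarrow> (nat \<Rightarrow> cell \<Rightarrow> nat) \<Rightarrow> cell set list \<Rightarrow> (nat \<Rightarrow> nat \<Rightarrow> nat)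
                    \<Rightarrow> cell \<Rightarrow> nat" where
  "lab3 T lams Bs r t =
     (if \<exists>k<length Bs. t \<in> Bs ! k \<and> 0 < lams k t
      then r (dim_cell t) (lab2 T lams Bs (SOME k. k < length Bs \<and> t \<in> Bs ! k \<and> 0 < lams k t) t)
      else 0)"

text \<open>Step 4. L = current (step-3) labels; M = equivalence of 1-cell labels produced by the
  merges so far (current labels of two 1-cells are equal iff their step-3 labels are M-related).\<close>
definition once_in :: "cell set \<Rightarrow> (cell \<Rightarrow> nat) \<Rightarrow> (nat \<times> nat) set \<Rightarrow> cell \<Rightarrow> cell \<Rightarrow> bool" where
  "once_in T L M t0 u =
     (u \<in> Gamma T t0 \<and> 0 < L u \<and> card {u' \<in> Gamma T t0. 0 < L u' \<and> (L u', L u) \<in> M} = 1)"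

definition face_labels :: "cell set \<Rightarrow> (cell \<Rightarrow> nat) \<Rightarrow> cell \<Rightarrow> nat set" where
  "face_labels T L u = {L s | s. s \<in> Gamma T u \<and> 0 < L s}"

definition merge_pairs :: "cell set \<Rightarrow> (cell \<Rightarrow> nat) \<Rightarrow> (nat \<times> nat) set \<Rightarrow> cell \<Rightarrow> (nat \<times> nat) set" where
  "merge_pairs T L M t0 =
     {(L u, L v) | u v. once_in T L M t0 u \<and> once_in T L M t0 v \<and> (L u, L v) \<notin> M \<and>
                        face_labels T L u = face_labels T L v}"

definition step4 :: "cell set \<Rightarrow> (cell \<Rightarrow> nat) \<Rightarrow> (nat \<times> nat) set \<Rightarrow> cell \<Rightarrow> (nat \<times> nat) set" where
  "step4 T L M t0 = equiv_closure (M \<union> merge_pairs T L M t0)"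

text \<open>tau' is (on 1-cells) a possible output of the block-wise method, for some block
  decomposition, block order, LABEL outputs, union-find representatives and 0-cell order.\<close>
definition blockwise_output :: "nat \<Rightarrow> nat \<Rightarrow> nat \<Rightarrow> (cell \<Rightarrow> nat) \<Rightarrow> (cell \<Rightarrow> nat) \<Rightarrow> bool" where
  "blockwise_output n1 n2 n3 \<sigma> tau' =
     (let T = tgrid n1 n2 n3 in
      \<exists>c1 c2 c3 Bs lams r order r4.
        valid_cuts (2 * int n1 - 1) c1 \<and> valid_cuts (2 * int n2 - 1) c2 \<and>
        valid_cuts (2 * int n3 - 1) c3 \<and>
        distinct Bs \<and> set Bs = block_family c1 c2 c3 \<and>
        (\<forall>k<length Bs. is_LABEL T \<sigma> (Bs ! k) (lams k)) \<and>
        (\<forall>j\<in>{1, 2}. is_set_rep (equiv_closure (uf_rel T lams Bs j)) (r j)) \<and>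
        distinct order \<and> set order = {t \<in> T. dim_cell t = 0} \<and>
        is_set_rep (fold (\<lambda>t0 M. step4 T (lab3 T lams Bs r) M t0) order Id) r4 \<and>
        (\<forall>u\<in>T. dim_cell u = 1 \<longrightarrow> tau' u = r4 (lab3 T lams Bs r u)))"

end

theory Submission
  imports Defs
begin


definition obox :: "cell set \<Rightarrow> bool" where
  "obox B = (\<exists>a1 b1 a2 b2 a3 b3. B = {a1..b1} \<times> {a2..b2} \<times> {a3..b3} \<and>
      odd a1 \<and> odd b1 \<and> odd a2 \<and> odd b2 \<and> odd a3 \<and> odd b3)"

lemma l1_one:
  "l1dist (a,b,c) (x,y,z) = 1 \<longleftrightarrow>
    ((x = a-1 \<or> x = a+1) \<and> y = b \<and> z = c) \<or> (x = a \<and> (y = b-1 \<or> y = b+1) \<and> z = c) \<or>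
    (x = a \<and> y = b \<and> (z = c-1 \<or> z = c+1))"
  unfolding l1dist_def by (simp add: abs_if) arith

lemma dim_cell_simp: "dim_cell (a,b,c) = (if odd a then 1 else 0) + (if odd b then 1 else 0) + (if odd c then 1 else 0)"
  by (simp add: dim_cell_def)



lemma dimpm:
  "dim_cell (a+1,b,c) = dim_cell (a,b,c) + 1 \<longleftrightarrow> even a"
  "dim_cell (a-1,b,c) = dim_cell (a,b,c) + 1 \<longleftrightarrow> even a"
  "dim_cell (a,b+1,c) = dim_cell (a,b,c) + 1 \<longleftrightarrow> even b"
  "dim_cell (a,b-1,c) = dim_cell (a,b,c) + 1 \<longleftrightarrow> even b"
  "dim_cell (a,b,c+1) = dim_cell (a,b,c) + 1 \<longleftrightarrow> even c"
  "dim_cell (a,b,c-1) = dim_cell (a,b,c) + 1 \<longleftrightarrow> even c"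
  by (simp_all add: dim_cell_simp)

lemma Gamma_eq: "Gamma B (a,b,c) = {s \<in> B. s \<in>
     (if even a then {(a-1,b,c),(a+1,b,c)} else {}) \<union>
     (if even b then {(a,b-1,c),(a,b+1,c)} else {}) \<union>
     (if even c then {(a,b,c-1),(a,b,c+1)} else {})}"
  unfolding Gamma_def six_nbr_def
  apply (rule Collect_cong)
  apply (case_tac s)
  apply (simp only: l1_one)
  apply (auto simp: dim_cell_simp)
  done


lemma obox_even:
  assumes "obox B" "(a,b,c) \<in> B"
  shows "even a \<Longrightarrow> (a-1,b,c) \<in> B \<and> (a+1,b,c) \<in> B"
    "even b \<Longrightarrow> (a,b-1,c) \<in> B \<and> (a,b+1,c) \<in> B"
    "even c \<Longrightarrow> (a,b,c-1) \<in> B \<and> (a,b,c+1) \<in> B"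
proof -
  obtain a1 b1 a2 b2 a3 b3 where B: "B = {a1..b1} \<times> {a2..b2} \<times> {a3..b3}"
    and o: "odd a1" "odd b1" "odd a2" "odd b2" "odd a3" "odd b3"
    using assms(1) unfolding obox_def by blast
  have r: "a1 \<le> a" "a \<le> b1" "a2 \<le> b" "b \<le> b2" "a3 \<le> c" "c \<le> b3" using assms(2) B by auto
  have e1: "even a \<Longrightarrow> a1 \<le> a - 1 \<and> a + 1 \<le> b1" using o r by presburger
  have e2: "even b \<Longrightarrow> a2 \<le> b - 1 \<and> b + 1 \<le> b2" using o r by presburger
  have e3: "even c \<Longrightarrow> a3 \<le> c - 1 \<and> c + 1 \<le> b3" using o r by presburger
  show "even a \<Longrightarrow> (a-1,b,c) \<in> B \<and> (a+1,b,c) \<in> B"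
    "even b \<Longrightarrow> (a,b-1,c) \<in> B \<and> (a,b+1,c) \<in> B"
    "even c \<Longrightarrow> (a,b,c-1) \<in> B \<and> (a,b,c+1) \<in> B"
    using e1 e2 e3 r by (auto simp: B)
qed

lemma Gamma_explicit:
  assumes "obox B" "(a,b,c) \<in> B"
  shows "Gamma B (a,b,c) =
     (if even a then {(a-1,b,c),(a+1,b,c)} else {}) \<union>
     (if even b then {(a,b-1,c),(a,b+1,c)} else {}) \<union>
     (if even c then {(a,b,c-1),(a,b,c+1)} else {})"
  unfolding Gamma_eq using obox_even[OF assms] by auto

lemma Gamma_sub:
  assumes "obox B" "t \<in> B"
  shows "Gamma T t \<subseteq> B"
proof -
  obtain a b c where t: "t = (a,b,c)" by (cases t) auto
  show ?thesis unfolding t Gamma_eq using obox_even[OF assms(1)] assms(2) t by auto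
qed

lemma Gamma_dim: "s \<in> Gamma T t \<Longrightarrow> dim_cell s = dim_cell t + 1"
  by (simp add: Gamma_def)

lemma Gamma_in: "s \<in> Gamma T t \<Longrightarrow> s \<in> T"
  by (simp add: Gamma_def)

lemma Gamma_finite: "finite (Gamma T t)"
proof -
  obtain a b c where t: "t = (a,b,c)" by (cases t) auto
  show ?thesis unfolding t Gamma_eq by auto
qed



lemma LABEL_pos:
  assumes L: "is_LABEL T \<sigma> B lam" and t: "t \<in> B" "dim_cell t = j" "j \<in> {0,1,2}"
  shows "0 < lam t \<longleftrightarrow> theta T lam t \<noteq> {}"
proof
  assume "0 < lam t" then show "theta T lam t \<noteq> {}" using L t unfolding is_LABEL_def by auto
next
  assume th: "theta T lam t \<noteq> {}"
  hence "t \<in> active_cells T lam B j" using t by (auto simp: active_cells_def)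
  hence "lam t \<in> {1..card (lam ` active_cells T lam B j)}" using L t unfolding is_LABEL_def by blast
  thus "0 < lam t" by auto
qed

lemma LABEL_active:
  assumes L: "is_LABEL T \<sigma> B lam" and t: "t \<in> B" "dim_cell t = j" "j \<in> {0,1,2}" "0 < lam t"
  shows "t \<in> active_cells T lam B j"
  using LABEL_pos[OF L t(1-3)] t by (auto simp: active_cells_def)

lemma LABEL_le:
  assumes L: "is_LABEL T \<sigma> B lam" and t: "t \<in> B" "dim_cell t = j" "j \<in> {0,1,2}" "0 < lam t"
  shows "lam t \<le> num_classes T lam B j"
proof -
  have "t \<in> active_cells T lam B j" using LABEL_active[OF assms] .
  hence "lam t \<in> {1..card (lam ` active_cells T lam B j)}" using L t unfolding is_LABEL_def by blast
  thus ?thesis by (simp add: num_classes_def)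
qed

lemma LABEL_same:
  assumes L: "is_LABEL T \<sigma> B lam" and j: "j \<in> {0,1,2}"
    and a: "t \<in> active_cells T lam B j" "t' \<in> active_cells T lam B j"
  shows "lam t = lam t' \<longleftrightarrow> same_class T lam B j t t'"
  using L j a unfolding is_LABEL_def by blast

lemma LABEL_3:
  assumes L: "is_LABEL T \<sigma> B lam" "t \<in> B" "dim_cell t = 3"
  shows "lam t = \<sigma> (voxel_of t)"
  using assms unfolding is_LABEL_def by blast

lemma theta_cong:
  assumes "\<forall>x\<in>Gamma T t. lam x = lam' x"
  shows "theta T lam t = theta T lam' t"
proof -
  have "\<And>l. {s \<in> Gamma T t. lam s = l} = {s \<in> Gamma T t. lam' s = l}" using assms by auto
  thus ?thesis unfolding theta_def by simp
qed

lemma same_class_mono: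
  assumes sc: "same_class T lam B j t t'"
    and h: "\<And>x. x \<in> active_cells T lam B j \<Longrightarrow> theta T lam x = theta T lam t \<Longrightarrow>
               x \<in> active_cells T lam' B' j \<and> theta T lam' x = theta T lam' t"
  shows "same_class T lam' B' j t t'"
proof -
  let ?R1 = "(\<lambda>x y. x \<in> active_cells T lam B j \<and> y \<in> active_cells T lam B j \<and>
             theta T lam x = theta T lam t \<and> theta T lam y = theta T lam t \<and>
             cell_conn T x y)"
  let ?R2 = "(\<lambda>x y. x \<in> active_cells T lam' B' j \<and> y \<in> active_cells T lam' B' j \<and>
             theta T lam' x = theta T lam' t \<and> theta T lam' y = theta T lam' t \<and>
             cell_conn T x y)"
  have "?R1 \<le> ?R2" using h by auto
  hence "?R1\<^sup>*\<^sup>* \<le> ?R2\<^sup>*\<^sup>*" by (rule rtranclp_mono)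
  moreover have "?R1\<^sup>*\<^sup>* t t'" using sc unfolding same_class_def by blast
  ultimately have "?R2\<^sup>*\<^sup>* t t'" by blast
  moreover have "t \<in> active_cells T lam' B' j" "t' \<in> active_cells T lam' B' j"
    "theta T lam' t = theta T lam' t'"
    using h[of t] h[of t'] sc unfolding same_class_def by auto
  ultimately show ?thesis unfolding same_class_def by blast
qed

lemma theta_transfer:
  assumes pos: "\<forall>s\<in>\<Gamma>. 0 < a s \<longleftrightarrow> 0 < b s"
    and eq: "\<forall>s\<in>\<Gamma>. \<forall>s'\<in>\<Gamma>. 0 < a s \<longrightarrow> (a s = a s' \<longleftrightarrow> b s = b s')"
    and s: "s \<in> \<Gamma>"
  shows "(0 < a s \<and> card {x \<in> \<Gamma>. a x = a s} = 1) \<longleftrightarrow> (0 < b s \<and> card {x \<in> \<Gamma>. b x = b s} = 1)"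
proof (cases "0 < a s")
  case True
  have "{x \<in> \<Gamma>. a x = a s} = {x \<in> \<Gamma>. b x = b s}" using eq s True by (auto simp: eq_commute)
  thus ?thesis using pos s True by auto
next
  case False thus ?thesis using pos s by auto
qed



lemma theta_mem: "l \<in> theta T lam u \<longleftrightarrow> 0 < l \<and> card {x \<in> Gamma T u. lam x = l} = 1"
  by (simp add: theta_def)

lemma theta_ex: "l \<in> theta T lam u \<Longrightarrow> \<exists>s\<in>Gamma T u. lam s = l"
proof -
  assume "l \<in> theta T lam u"
  hence "card {x \<in> Gamma T u. lam x = l} = 1" by (simp add: theta_def)
  hence "{x \<in> Gamma T u. lam x = l} \<noteq> {}" by (metis card.empty zero_neq_one)
  thus ?thesis by blast
qed

locale tr =
  fixes T \<sigma> B B' lam lam'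
  assumes L: "is_LABEL T \<sigma> B lam" and L': "is_LABEL T \<sigma> B' lam'"
    and ob: "obox B" and sub: "B \<subseteq> B'" and sub': "B' \<subseteq> T"
begin

lemma theta2: "t \<in> B \<Longrightarrow> dim_cell t = 2 \<Longrightarrow> theta T lam t = theta T lam' t"
proof (rule theta_cong, rule ballI)
  fix x assume t: "t \<in> B" "dim_cell t = 2" and x: "x \<in> Gamma T t"
  have xB: "x \<in> B" using Gamma_sub[OF ob t(1)] x by blast
  have d: "dim_cell x = 3" using Gamma_dim[OF x] t by simp
  show "lam x = lam' x" using LABEL_3[OF L xB d] LABEL_3[OF L' _ d] xB sub by auto
qed

lemma Q2: "t \<in> B \<Longrightarrow> dim_cell t = 2 \<Longrightarrow> 0 < lam t \<longleftrightarrow> 0 < lam' t"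
  using LABEL_pos[OF L, of t 2] LABEL_pos[OF L', of t 2] theta2 sub by auto

lemma P2:
  assumes t: "t \<in> B" "t' \<in> B" "dim_cell t = 2" "dim_cell t' = 2" "0 < lam t" "lam t = lam t'"
  shows "lam' t = lam' t'"
proof -
  have a: "t \<in> active_cells T lam B 2" "t' \<in> active_cells T lam B 2"
    using LABEL_active[OF L] t by auto
  have sc: "same_class T lam B 2 t t'" using LABEL_same[OF L _ a] t by auto
  have sc': "same_class T lam' B' 2 t t'"
  proof (rule same_class_mono[OF sc])
    fix x assume x: "x \<in> active_cells T lam B 2" "theta T lam x = theta T lam t"
    show "x \<in> active_cells T lam' B' 2 \<and> theta T lam' x = theta T lam' t"
      using x theta2[of x] theta2[of t] t sub by (auto simp: active_cells_def)
  qed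
  have a': "t \<in> active_cells T lam' B' 2" "t' \<in> active_cells T lam' B' 2"
    using sc' unfolding same_class_def by auto
  show ?thesis using LABEL_same[OF L' _ a'] sc' by auto
qed

lemma C2:
  assumes u: "u \<in> B" "dim_cell u = 1" and s: "s \<in> Gamma T u" "s' \<in> Gamma T u"
    and p: "0 < lam' s" "lam' s = lam' s'"
  shows "lam s = lam s'"
proof -
  have sB: "s \<in> B" "s' \<in> B" using Gamma_sub[OF ob u(1)] s by auto
  have d: "dim_cell s = 2" "dim_cell s' = 2" using Gamma_dim s u by auto
  have a': "s \<in> active_cells T lam' B' 2" "s' \<in> active_cells T lam' B' 2"
    using LABEL_active[OF L', of s 2] LABEL_active[OF L', of s' 2] sB d p sub by auto
  have "same_class T lam' B' 2 s s'" using LABEL_same[OF L' _ a'] p by auto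
  hence th: "theta T lam s = theta T lam s'" using theta2 sB d unfolding same_class_def by auto
  have pos: "0 < lam s" "0 < lam s'" using Q2 sB d p by auto
  have a: "s \<in> active_cells T lam B 2" "s' \<in> active_cells T lam B 2"
    using LABEL_active[OF L, of s 2] LABEL_active[OF L, of s' 2] sB d pos by auto
  have cc: "cell_conn T s s'" unfolding cell_conn_def using s u sub sub' by blast
  have "same_class T lam B 2 s s'" unfolding same_class_def using a th cc
    by (auto intro!: r_into_rtranclp)
  thus ?thesis using LABEL_same[OF L _ a] by auto
qed

lemma cond1:
  assumes u: "u \<in> B" "dim_cell u = 1"
  shows "\<forall>s\<in>Gamma T u. 0 < lam s \<longleftrightarrow> 0 < lam' s"
    "\<forall>s\<in>Gamma T u. \<forall>s'\<in>Gamma T u. 0 < lam s \<longrightarrow> (lam s = lam s' \<longleftrightarrow> lam' s = lam' s')"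
proof -
  have g: "\<And>s. s \<in> Gamma T u \<Longrightarrow> s \<in> B \<and> dim_cell s = 2" using Gamma_sub[OF ob u(1)] Gamma_dim u by fastforce
  show "\<forall>s\<in>Gamma T u. 0 < lam s \<longleftrightarrow> 0 < lam' s"
  proof
    fix s assume "s \<in> Gamma T u" thus "0 < lam s \<longleftrightarrow> 0 < lam' s" using g[of s] Q2[of s] by blast
  qed
  show "\<forall>s\<in>Gamma T u. \<forall>s'\<in>Gamma T u. 0 < lam s \<longrightarrow> (lam s = lam s' \<longleftrightarrow> lam' s = lam' s')"
  proof (intro ballI impI iffI)
    fix s s' assume s: "s \<in> Gamma T u" "s' \<in> Gamma T u" "0 < lam s"
    have gs: "s \<in> B" "dim_cell s = 2" "s' \<in> B" "dim_cell s' = 2" using g s by auto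
    { assume "lam s = lam s'" thus "lam' s = lam' s'" using P2[OF gs(1,3,2,4) s(3)] by blast }
    { assume "lam' s = lam' s'" thus "lam s = lam s'" using C2[OF u s(1,2)] Q2[OF gs(1,2)] s(3) by auto }
  qed
qed

lemma trans_mem:
  assumes u: "u \<in> B" "dim_cell u = 1" and s: "s \<in> Gamma T u"
  shows "lam s \<in> theta T lam u \<longleftrightarrow> lam' s \<in> theta T lam' u"
  unfolding theta_mem using theta_transfer[OF cond1[OF u] s] by simp

lemma Q1:
  assumes u: "u \<in> B" "dim_cell u = 1"
  shows "0 < lam u \<longleftrightarrow> 0 < lam' u"
proof -
  have "theta T lam u \<noteq> {} \<longleftrightarrow> theta T lam' u \<noteq> {}"
  proof
    assume "theta T lam u \<noteq> {}"
    then obtain l where l: "l \<in> theta T lam u" by blast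
    then obtain s where s: "s \<in> Gamma T u" "lam s = l" using theta_ex by blast
    have "lam' s \<in> theta T lam' u" using trans_mem[OF u s(1)] l s by simp
    thus "theta T lam' u \<noteq> {}" by blast
  next
    assume "theta T lam' u \<noteq> {}"
    then obtain l where l: "l \<in> theta T lam' u" by blast
    then obtain s where s: "s \<in> Gamma T u" "lam' s = l" using theta_ex by blast
    have "lam s \<in> theta T lam u" using trans_mem[OF u s(1)] l s by simp
    thus "theta T lam u \<noteq> {}" by blast
  qed
  thus ?thesis using LABEL_pos[OF L, of u 1] LABEL_pos[OF L', of u 1] u sub by auto
qed

definition F where "F l = lam' (SOME s. s \<in> B \<and> dim_cell s = 2 \<and> lam s = l)"

lemma Fp: assumes "s \<in> B" "dim_cell s = 2" "0 < lam s" shows "F (lam s) = lam' s"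
proof -
  let ?s = "SOME x. x \<in> B \<and> dim_cell x = 2 \<and> lam x = lam s"
  have "?s \<in> B \<and> dim_cell ?s = 2 \<and> lam ?s = lam s" by (rule someI[of _ s]) (use assms in auto)
  thus ?thesis unfolding F_def using P2[of ?s s] assms by auto
qed

lemma thF:
  assumes u: "u \<in> B" "dim_cell u = 1"
  shows "theta T lam' u = F ` theta T lam u"
proof -
  have g: "\<And>s. s \<in> Gamma T u \<Longrightarrow> s \<in> B \<and> dim_cell s = 2" using Gamma_sub[OF ob u(1)] Gamma_dim u by fastforce
  show ?thesis
  proof
    show "theta T lam' u \<subseteq> F ` theta T lam u"
    proof
      fix l assume l: "l \<in> theta T lam' u"
      then obtain s where s: "s \<in> Gamma T u" "lam' s = l" using theta_ex by blast
      have "lam s \<in> theta T lam u" using trans_mem[OF u s(1)] l s by simp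
      moreover have "0 < lam s" using Q2 g[OF s(1)] l s by (auto simp: theta_mem)
      moreover have "F (lam s) = l" using Fp[of s] g[OF s(1)] s \<open>0 < lam s\<close> by auto
      ultimately show "l \<in> F ` theta T lam u" by (metis imageI)
    qed
  next
    show "F ` theta T lam u \<subseteq> theta T lam' u"
    proof
      fix l' assume "l' \<in> F ` theta T lam u"
      then obtain l where l: "l \<in> theta T lam u" "l' = F l" by blast
      then obtain s where s: "s \<in> Gamma T u" "lam s = l" using theta_ex by blast
      have "0 < lam s" using l s by (simp add: theta_mem)
      hence "F l = lam' s" using Fp[of s] g[OF s(1)] s by auto
      thus "l' \<in> theta T lam' u" using trans_mem[OF u s(1)] l s by simp
    qed
  qed
qed

lemma P1:
  assumes t: "t \<in> B" "t' \<in> B" "dim_cell t = 1" "dim_cell t' = 1" "0 < lam t" "lam t = lam t'"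
  shows "lam' t = lam' t'"
proof -
  have a: "t \<in> active_cells T lam B 1" "t' \<in> active_cells T lam B 1"
    using LABEL_active[OF L] t by auto
  have sc: "same_class T lam B 1 t t'" using LABEL_same[OF L _ a] t by auto
  have sc': "same_class T lam' B' 1 t t'"
  proof (rule same_class_mono[OF sc])
    fix x assume x: "x \<in> active_cells T lam B 1" "theta T lam x = theta T lam t"
    have xB: "x \<in> B" "dim_cell x = 1" using x by (auto simp: active_cells_def)
    have "theta T lam' x = theta T lam' t" using thF[OF xB] thF[OF t(1,3)] x by simp
    moreover have "theta T lam' x \<noteq> {}" using thF[OF xB] x by (auto simp: active_cells_def)
    ultimately show "x \<in> active_cells T lam' B' 1 \<and> theta T lam' x = theta T lam' t"
      using xB sub by (auto simp: active_cells_def)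
  qed
  have a': "t \<in> active_cells T lam' B' 1" "t' \<in> active_cells T lam' B' 1"
    using sc' unfolding same_class_def by auto
  show ?thesis using LABEL_same[OF L' _ a'] sc' by auto
qed

end



definition D :: "nat \<Rightarrow> nat \<Rightarrow> nat set" where "D p q = (if p \<noteq> q then {p,q} else {})"

lemma D_commute: "D p q = D q p" by (auto simp: D_def)

lemma pure:
  fixes c1 c2 c3 c4 :: nat
  defines "t1 \<equiv> D c1 c2" and "t2 \<equiv> D c2 c3" and "t3 \<equiv> D c3 c4" and "t4 \<equiv> D c4 c1"
  assumes X: "(t1 \<noteq> {} \<and> t1 \<noteq> t2 \<and> t1 \<noteq> t3 \<and> t1 \<noteq> t4) \<or> (t2 \<noteq> {} \<and> t2 \<noteq> t1 \<and> t2 \<noteq> t3 \<and> t2 \<noteq> t4)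
     \<or> (t3 \<noteq> {} \<and> t3 \<noteq> t1 \<and> t3 \<noteq> t2 \<and> t3 \<noteq> t4) \<or> (t4 \<noteq> {} \<and> t4 \<noteq> t1 \<and> t4 \<noteq> t2 \<and> t4 \<noteq> t3)"
  and Y: "(t1 = t2 \<and> t1 \<noteq> {}) \<or> (t1 = t3 \<and> t1 \<noteq> {}) \<or> (t1 = t4 \<and> t1 \<noteq> {}) \<or>
          (t2 = t3 \<and> t2 \<noteq> {}) \<or> (t2 = t4 \<and> t2 \<noteq> {}) \<or> (t3 = t4 \<and> t3 \<noteq> {})"
  shows False
  using X Y unfolding t1_def t2_def t3_def t4_def D_def
  by (auto simp: doubleton_eq_iff split: if_splits)

lemma cyc:
  fixes lab :: "'a \<Rightarrow> nat" and th :: "'a \<Rightarrow> nat set"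
  assumes G: "G = {f1,f2,f3,f4}" "distinct [f1,f2,f3,f4]"
    and th: "th f1 = D c1 c2" "th f2 = D c2 c3" "th f3 = D c3 c4" "th f4 = D c4 c1"
    and pos: "\<forall>f\<in>G. 0 < lab f \<longleftrightarrow> th f \<noteq> {}"
    and eq: "\<forall>f\<in>G. \<forall>f'\<in>G. 0 < lab f \<longrightarrow> (lab f = lab f' \<longleftrightarrow> th f = th f')"
    and act: "0 < l" "card {f\<in>G. lab f = l} = 1"
  shows "\<forall>f\<in>G. \<forall>f'\<in>G. lab f = lab f' \<and> 0 < lab f \<longrightarrow> f = f'"
proof (intro ballI impI, rule ccontr)
  fix f f' assume f: "f \<in> G" "f' \<in> G" "lab f = lab f' \<and> 0 < lab f" "f \<noteq> f'"
  have "\<exists>x. {f\<in>G. lab f = l} = {x}" using act(2) by (simp add: card_1_singleton_iff)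
  then obtain f0 where f0: "{f\<in>G. lab f = l} = {f0}" by blast
  have "f0 \<in> {f\<in>G. lab f = l}" unfolding f0 by simp
  hence f0G: "f0 \<in> G" "lab f0 = l" by simp_all
  have uniq: "\<And>g. g \<in> G \<Longrightarrow> lab g = l \<Longrightarrow> g = f0"
  proof -
    fix g assume "g \<in> G" "lab g = l"
    hence "g \<in> {f\<in>G. lab f = l}" by simp
    thus "g = f0" unfolding f0 by simp
  qed
  have thf0: "th f0 \<noteq> {}" using bspec[OF pos f0G(1)] f0G(2) act(1) by simp
  have U: "\<And>g. g \<in> G \<Longrightarrow> g \<noteq> f0 \<Longrightarrow> th g \<noteq> th f0"
  proof
    fix g assume g: "g \<in> G" "g \<noteq> f0" "th g = th f0"
    hence lg: "0 < lab g" using bspec[OF pos g(1)] thf0 by simp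
    have "lab g = lab f0" using bspec[OF bspec[OF eq g(1)] f0G(1)] lg g(3) by simp
    thus False using uniq[OF g(1)] g(2) f0G(2) by simp
  qed
  have thff: "th f = th f'" using bspec[OF bspec[OF eq f(1)] f(2)] f(3) by simp
  have thff2: "th f \<noteq> {}" using bspec[OF pos f(1)] f(3) by simp
  have d: "f1 \<noteq> f2" "f1 \<noteq> f3" "f1 \<noteq> f4" "f2 \<noteq> f3" "f2 \<noteq> f4" "f3 \<noteq> f4" using G(2) by auto
  have inG: "f1 \<in> G" "f2 \<in> G" "f3 \<in> G" "f4 \<in> G" using G(1) by auto
  have X: "(th f1 \<noteq> {} \<and> th f1 \<noteq> th f2 \<and> th f1 \<noteq> th f3 \<and> th f1 \<noteq> th f4) \<or> (th f2 \<noteq> {} \<and> th f2 \<noteq> th f1 \<and> th f2 \<noteq> th f3 \<and> th f2 \<noteq> th f4)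
     \<or> (th f3 \<noteq> {} \<and> th f3 \<noteq> th f1 \<and> th f3 \<noteq> th f2 \<and> th f3 \<noteq> th f4) \<or> (th f4 \<noteq> {} \<and> th f4 \<noteq> th f1 \<and> th f4 \<noteq> th f2 \<and> th f4 \<noteq> th f3)"
  proof -
    have "f0 = f1 \<or> f0 = f2 \<or> f0 = f3 \<or> f0 = f4" using f0G(1) G(1) by simp
    thus ?thesis
    proof (elim disjE)
      assume a: "f0 = f1" show ?thesis using U[OF inG(2)] U[OF inG(3)] U[OF inG(4)] thf0 d unfolding a by simp
    next
      assume a: "f0 = f2" show ?thesis using U[OF inG(1)] U[OF inG(3)] U[OF inG(4)] thf0 d unfolding a by simp
    next
      assume a: "f0 = f3" show ?thesis using U[OF inG(1)] U[OF inG(2)] U[OF inG(4)] thf0 d unfolding a by simp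
    next
      assume a: "f0 = f4" show ?thesis using U[OF inG(1)] U[OF inG(2)] U[OF inG(3)] thf0 d unfolding a by simp
    qed
  qed
  have "f = f1 \<or> f = f2 \<or> f = f3 \<or> f = f4" "f' = f1 \<or> f' = f2 \<or> f' = f3 \<or> f' = f4"
    using f(1,2) G(1) by simp_all
  hence Y: "(th f1 = th f2 \<and> th f1 \<noteq> {}) \<or> (th f1 = th f3 \<and> th f1 \<noteq> {}) \<or> (th f1 = th f4 \<and> th f1 \<noteq> {}) \<or>
          (th f2 = th f3 \<and> th f2 \<noteq> {}) \<or> (th f2 = th f4 \<and> th f2 \<noteq> {}) \<or> (th f3 = th f4 \<and> th f3 \<noteq> {})"
    using f(4) thff thff2 by (elim disjE; simp)
  show False using pure[OF X[unfolded th] Y[unfolded th]] .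
qed

lemma theta_two:
  assumes "Gamma T f = {w, w'}" "w \<noteq> w'" "0 < lam w" "0 < lam w'"
  shows "theta T lam f = D (lam w) (lam w')"
proof -
  have "\<And>l. {x \<in> Gamma T f. lam x = l} = (if lam w = l then {w} else {}) \<union> (if lam w' = l then {w'} else {})"
    using assms(1) by auto
  hence c: "\<And>l. card {x \<in> Gamma T f. lam x = l} = (if lam w = l then 1 else 0) + (if lam w' = l then 1 else 0)"
    using assms(2) by (auto simp: card_insert_if)
  show ?thesis unfolding theta_def c D_def using assms(3,4) by (auto split: if_splits)
qed



locale glob =
  fixes T \<sigma> tau
  assumes obT: "obox T" and Lt: "is_LABEL T \<sigma> T tau"
    and pos3: "\<forall>w\<in>T. dim_cell w = 3 \<longrightarrow> 0 < tau w"
begin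

lemma face_pos:
  assumes "u \<in> T" "dim_cell u = 1" "f \<in> Gamma T u"
  shows "0 < tau f \<longleftrightarrow> theta T tau f \<noteq> {}"
proof -
  have "f \<in> T" "dim_cell f = 2" using Gamma_in[OF assms(3)] Gamma_dim[OF assms(3)] assms(2) by auto
  thus ?thesis using LABEL_pos[OF Lt, of f 2] by auto
qed

lemma face_eq:
  assumes u: "u \<in> T" "dim_cell u = 1" and f: "f \<in> Gamma T u" "f' \<in> Gamma T u" and p: "0 < tau f"
  shows "tau f = tau f' \<longleftrightarrow> theta T tau f = theta T tau f'"
proof -
  have fT: "f \<in> T" "dim_cell f = 2" "f' \<in> T" "dim_cell f' = 2"
    using Gamma_in f Gamma_dim u by auto
  have af: "f \<in> active_cells T tau T 2" using LABEL_active[OF Lt, of f 2] fT p by auto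
  show ?thesis
  proof
    assume e: "tau f = tau f'"
    have af': "f' \<in> active_cells T tau T 2" using LABEL_active[OF Lt, of f' 2] fT p e by auto
    have "same_class T tau T 2 f f'" using LABEL_same[OF Lt _ af af'] e by simp
    thus "theta T tau f = theta T tau f'" unfolding same_class_def by blast
  next
    assume e: "theta T tau f = theta T tau f'"
    have "theta T tau f \<noteq> {}" using af by (simp add: active_cells_def)
    hence af': "f' \<in> active_cells T tau T 2" using fT e by (simp add: active_cells_def)
    have cc: "cell_conn T f f'" unfolding cell_conn_def using f u by blast
    have "same_class T tau T 2 f f'" unfolding same_class_def using af af' e cc
      by (auto intro!: r_into_rtranclp)
    thus "tau f = tau f'" using LABEL_same[OF Lt _ af af'] by simp
  qed
qed

lemma inj_cycle:
  assumes u: "u \<in> T" "dim_cell u = 1" "theta T tau u \<noteq> {}"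
    and G: "Gamma T u = {f1,f2,f3,f4}" "distinct [f1,f2,f3,f4]"
    and g1: "Gamma T f1 = {w1,w2}" and g2: "Gamma T f2 = {w2,w3}"
    and g3: "Gamma T f3 = {w3,w4}" and g4: "Gamma T f4 = {w4,w1}"
    and w: "w1 \<noteq> w2" "w2 \<noteq> w3" "w3 \<noteq> w4" "w4 \<noteq> w1"
  shows "\<forall>f\<in>Gamma T u. \<forall>f'\<in>Gamma T u. tau f = tau f' \<and> 0 < tau f \<longrightarrow> f = f'"
proof -
  have fd: "dim_cell f1 = 2" "dim_cell f2 = 2" "dim_cell f3 = 2" "dim_cell f4 = 2"
    using Gamma_dim[of _ T u] G(1) u(2) by auto
  have wd: "w1 \<in> Gamma T f1" "w2 \<in> Gamma T f1" "w3 \<in> Gamma T f3" "w4 \<in> Gamma T f3"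
    using g1 g3 by auto
  have wp: "0 < tau w1" "0 < tau w2" "0 < tau w3" "0 < tau w4"
    using pos3 Gamma_in[OF wd(1)] Gamma_in[OF wd(2)] Gamma_in[OF wd(3)] Gamma_in[OF wd(4)]
      Gamma_dim[OF wd(1)] Gamma_dim[OF wd(2)] Gamma_dim[OF wd(3)] Gamma_dim[OF wd(4)] fd by auto
  have th: "theta T tau f1 = D (tau w1) (tau w2)" "theta T tau f2 = D (tau w2) (tau w3)"
    "theta T tau f3 = D (tau w3) (tau w4)" "theta T tau f4 = D (tau w4) (tau w1)"
    using theta_two[OF g1 w(1) wp(1,2)] theta_two[OF g2 w(2) wp(2,3)]
      theta_two[OF g3 w(3) wp(3,4)] theta_two[OF g4 w(4) wp(4,1)] by auto
  obtain l where l: "l \<in> theta T tau u" using u(3) by blast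
  have act: "0 < l" "card {f \<in> Gamma T u. tau f = l} = 1" using l by (simp_all add: theta_mem)
  show ?thesis
    by (rule cyc[OF G th _ _ act]) (use face_pos[OF u(1,2)] face_eq[OF u(1,2)] in auto)
qed

lemma inj1:
  assumes u: "u \<in> T" "dim_cell u = 1" and uth: "theta T tau u \<noteq> {}"
  shows "\<forall>f\<in>Gamma T u. \<forall>f'\<in>Gamma T u. tau f = tau f' \<and> 0 < tau f \<longrightarrow> f = f'"
proof -
  obtain a b c where ue: "u = (a,b,c)" by (cases u) auto
  have uT: "(a,b,c) \<in> T" using u ue by simp
  have d: "dim_cell (a,b,c) = 1" using u ue by simp

  have cA: "odd a \<and> even b \<and> even c \<Longrightarrow> ?thesis"
  proof -
    assume p: "odd a \<and> even b \<and> even c"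
    have m: "(a,b+1,c) \<in> T" "(a,b,c+1) \<in> T" "(a,b-1,c) \<in> T" "(a,b,c-1) \<in> T"
      using obox_even[OF obT uT] p by auto
    show ?thesis unfolding ue
    proof (rule inj_cycle[OF u[unfolded ue] uth[unfolded ue]])
      show "Gamma T (a,b,c) = {(a,b+1,c),(a,b,c+1),(a,b-1,c),(a,b,c-1)}"
        using Gamma_explicit[OF obT uT] p by auto
      show "distinct [(a,b+1,c),(a,b,c+1),(a,b-1,c),(a,b,c-1)]" by auto
      show "Gamma T (a,b+1,c) = {(a,b+1,c-1),(a,b+1,c+1)}" using Gamma_explicit[OF obT m(1)] p by auto
      show "Gamma T (a,b,c+1) = {(a,b+1,c+1),(a,b-1,c+1)}" using Gamma_explicit[OF obT m(2)] p by auto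
      show "Gamma T (a,b-1,c) = {(a,b-1,c+1),(a,b-1,c-1)}" using Gamma_explicit[OF obT m(3)] p by auto
      show "Gamma T (a,b,c-1) = {(a,b-1,c-1),(a,b+1,c-1)}" using Gamma_explicit[OF obT m(4)] p by auto
    qed auto
  qed

  have cB: "even a \<and> odd b \<and> even c \<Longrightarrow> ?thesis"
  proof -
    assume p: "even a \<and> odd b \<and> even c"
    have m: "(a+1,b,c) \<in> T" "(a,b,c+1) \<in> T" "(a-1,b,c) \<in> T" "(a,b,c-1) \<in> T"
      using obox_even[OF obT uT] p by auto
    show ?thesis unfolding ue
    proof (rule inj_cycle[OF u[unfolded ue] uth[unfolded ue]])
      show "Gamma T (a,b,c) = {(a+1,b,c),(a,b,c+1),(a-1,b,c),(a,b,c-1)}"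
        using Gamma_explicit[OF obT uT] p by auto
      show "distinct [(a+1,b,c),(a,b,c+1),(a-1,b,c),(a,b,c-1)]" by auto
      show "Gamma T (a+1,b,c) = {(a+1,b,c-1),(a+1,b,c+1)}" using Gamma_explicit[OF obT m(1)] p by auto
      show "Gamma T (a,b,c+1) = {(a+1,b,c+1),(a-1,b,c+1)}" using Gamma_explicit[OF obT m(2)] p by auto
      show "Gamma T (a-1,b,c) = {(a-1,b,c+1),(a-1,b,c-1)}" using Gamma_explicit[OF obT m(3)] p by auto
      show "Gamma T (a,b,c-1) = {(a-1,b,c-1),(a+1,b,c-1)}" using Gamma_explicit[OF obT m(4)] p by auto
    qed auto
  qed

  have cC: "even a \<and> even b \<and> odd c \<Longrightarrow> ?thesis"
  proof -
    assume p: "even a \<and> even b \<and> odd c"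
    have m: "(a+1,b,c) \<in> T" "(a,b+1,c) \<in> T" "(a-1,b,c) \<in> T" "(a,b-1,c) \<in> T"
      using obox_even[OF obT uT] p by auto
    show ?thesis unfolding ue
    proof (rule inj_cycle[OF u[unfolded ue] uth[unfolded ue]])
      show "Gamma T (a,b,c) = {(a+1,b,c),(a,b+1,c),(a-1,b,c),(a,b-1,c)}"
        using Gamma_explicit[OF obT uT] p by auto
      show "distinct [(a+1,b,c),(a,b+1,c),(a-1,b,c),(a,b-1,c)]" by auto
      show "Gamma T (a+1,b,c) = {(a+1,b-1,c),(a+1,b+1,c)}" using Gamma_explicit[OF obT m(1)] p by auto
      show "Gamma T (a,b+1,c) = {(a+1,b+1,c),(a-1,b+1,c)}" using Gamma_explicit[OF obT m(2)] p by auto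
      show "Gamma T (a-1,b,c) = {(a-1,b+1,c),(a-1,b-1,c)}" using Gamma_explicit[OF obT m(3)] p by auto
      show "Gamma T (a,b-1,c) = {(a-1,b-1,c),(a+1,b-1,c)}" using Gamma_explicit[OF obT m(4)] p by auto
    qed auto
  qed

  have "(odd a \<and> even b \<and> even c) \<or> (even a \<and> odd b \<and> even c) \<or> (even a \<and> even b \<and> odd c)"
    using d by (auto simp: dim_cell_simp split: if_splits)
  thus ?thesis using cA cB cC by blast
qed

lemma theta1_eq:
  assumes u: "u \<in> T" "dim_cell u = 1" "theta T tau u \<noteq> {}"
  shows "theta T tau u = {tau s | s. s \<in> Gamma T u \<and> 0 < tau s}"
proof
  show "theta T tau u \<subseteq> {tau s | s. s \<in> Gamma T u \<and> 0 < tau s}"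
  proof
    fix l assume l: "l \<in> theta T tau u"
    then obtain s where "s \<in> Gamma T u" "tau s = l" using theta_ex by blast
    moreover have "0 < l" using l by (simp add: theta_mem)
    ultimately show "l \<in> {tau s | s. s \<in> Gamma T u \<and> 0 < tau s}" by blast
  qed
next
  show "{tau s | s. s \<in> Gamma T u \<and> 0 < tau s} \<subseteq> theta T tau u"
  proof clarify
    fix s assume s: "s \<in> Gamma T u" "0 < tau s"
    have "{x \<in> Gamma T u. tau x = tau s} = {s}" using inj1[OF u] s by auto
    thus "tau s \<in> theta T tau u" using s by (simp add: theta_mem)
  qed
qed

end



lemma eqcl_fun:
  assumes "(x, y) \<in> equiv_closure R" "\<forall>(a,b)\<in>R. f a = f b"
  shows "f x = f y"
proof -
  have "(x, y) \<in> (R \<union> R\<inverse>)\<^sup>*" using assms(1) by (simp add: equiv_closure_def)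
  thus ?thesis
  proof (induction rule: rtrancl_induct)
    case base thus ?case by simp
  next
    case (step y z) thus ?case using assms(2) by auto
  qed
qed

lemma eqcl_pos:
  assumes "(x, y) \<in> equiv_closure R" "\<forall>(a,b)\<in>R. 0 < a \<and> 0 < b" "0 < (x::nat)"
  shows "0 < y"
proof -
  have "(x, y) \<in> (R \<union> R\<inverse>)\<^sup>*" using assms(1) by (simp add: equiv_closure_def)
  thus ?thesis
  proof (induction rule: rtrancl_induct)
    case base thus ?case using assms(3) by simp
  next
    case (step y z) thus ?case using assms(2) by auto
  qed
qed

lemma offset_mono:
  assumes "k < k'"
  shows "offset T lams Bs j k + num_classes T (lams k) (Bs ! k) j \<le> offset T lams Bs j k'"
proof -
  have "offset T lams Bs j k + num_classes T (lams k) (Bs ! k) j = offset T lams Bs j (Suc k)"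
    by (simp add: offset_def)
  also have "\<dots> \<le> offset T lams Bs j k'" unfolding offset_def
    by (rule sum_mono2) (use assms in auto)
  finally show ?thesis .
qed

locale main = glob T \<sigma> tau for T \<sigma> tau +
  fixes Bs lams r
  assumes bl: "\<forall>k<length Bs. obox (Bs!k) \<and> Bs!k \<subseteq> T \<and> is_LABEL T \<sigma> (Bs!k) (lams k)"
    and cover: "\<forall>t\<in>T. \<exists>k<length Bs. t \<in> Bs!k"
    and rep: "\<forall>j\<in>{1,2}. is_set_rep (equiv_closure (uf_rel T lams Bs j)) (r j)"
begin

lemma trk: "k < length Bs \<Longrightarrow> tr T \<sigma> (Bs!k) T (lams k) tau"
  unfolding tr_def using bl Lt by auto

lemma Qj: "k < length Bs \<Longrightarrow> t \<in> Bs!k \<Longrightarrow> dim_cell t = j \<Longrightarrow> j \<in> {1,2} \<Longrightarrow>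
  0 < lams k t \<longleftrightarrow> 0 < tau t"
  using tr.Q1[OF trk, of k t] tr.Q2[OF trk, of k t] by auto

lemma Pj: "k < length Bs \<Longrightarrow> t \<in> Bs!k \<Longrightarrow> t' \<in> Bs!k \<Longrightarrow> dim_cell t = j \<Longrightarrow> dim_cell t' = j \<Longrightarrow>
   j \<in> {1,2} \<Longrightarrow> 0 < lams k t \<Longrightarrow> lams k t = lams k t' \<Longrightarrow> tau t = tau t'"
  using tr.P1[OF trk, of k t t'] tr.P2[OF trk, of k t t'] by auto

lemma lab2_bounds:
  assumes "k < length Bs" "t \<in> Bs!k" "dim_cell t = j" "j \<in> {1,2}" "0 < lams k t"
  shows "offset T lams Bs j k < lab2 T lams Bs k t"
    "lab2 T lams Bs k t \<le> offset T lams Bs j k + num_classes T (lams k) (Bs ! k) j"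
proof -
  have "lams k t \<le> num_classes T (lams k) (Bs ! k) j"
    using LABEL_le[of T \<sigma> "Bs!k" "lams k" t j] bl assms by auto
  thus "offset T lams Bs j k < lab2 T lams Bs k t"
    "lab2 T lams Bs k t \<le> offset T lams Bs j k + num_classes T (lams k) (Bs ! k) j"
    using assms by (auto simp: lab2_def)
qed

lemma lab2_inj:
  assumes k: "k < length Bs" "t \<in> Bs!k" "dim_cell t = j" "0 < lams k t"
    and k': "k' < length Bs" "t' \<in> Bs!k'" "dim_cell t' = j" "0 < lams k' t'"
    and j: "j \<in> {1,2}" and e: "lab2 T lams Bs k t = lab2 T lams Bs k' t'"
  shows "k = k' \<and> lams k t = lams k' t'"
proof -
  have "\<not> k < k'"
  proof
    assume "k < k'"
    thus False using lab2_bounds[OF k(1-3) j k(4)] lab2_bounds[OF k'(1-3) j k'(4)]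
      offset_mono[of k k' T lams Bs j] e by linarith
  qed
  moreover have "\<not> k' < k"
  proof
    assume "k' < k"
    thus False using lab2_bounds[OF k(1-3) j k(4)] lab2_bounds[OF k'(1-3) j k'(4)]
      offset_mono[of k' k T lams Bs j] e by linarith
  qed
  ultimately have "k = k'" by simp
  thus ?thesis using e k k' by (auto simp: lab2_def)
qed

definition good where "good j t x = (\<exists>k<length Bs. t \<in> Bs!k \<and> dim_cell t = j \<and> 0 < lams k t \<and> lab2 T lams Bs k t = x)"

definition g where "g j x = tau (SOME t. good j t x)"

lemma g_prop:
  assumes "k < length Bs" "t \<in> Bs!k" "dim_cell t = j" "j \<in> {1,2}" "0 < lams k t"
  shows "g j (lab2 T lams Bs k t) = tau t"
proof -
  let ?x = "lab2 T lams Bs k t"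
  have "good j t ?x" using assms unfolding good_def by blast
  hence "good j (SOME t. good j t ?x) ?x" by (rule someI)
  then obtain k' where k': "k' < length Bs" "(SOME t. good j t ?x) \<in> Bs!k'"
    "dim_cell (SOME t. good j t ?x) = j" "0 < lams k' (SOME t. good j t ?x)"
    "lab2 T lams Bs k' (SOME t. good j t ?x) = ?x" unfolding good_def by blast
  from lab2_inj[OF assms(1,2,3,5) k'(1-4) assms(4)] k'(5)
  have "k = k'" "lams k t = lams k' (SOME t. good j t ?x)" by auto
  thus ?thesis unfolding g_def using Pj[OF assms(1,2) _ assms(3) _ assms(4,5)] k' by metis
qed

lemma uf_fun: "j \<in> {1,2} \<Longrightarrow> \<forall>(a,b)\<in>uf_rel T lams Bs j. g j a = g j b"
  unfolding uf_rel_def using g_prop by fastforce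

lemma uf_pos: "\<forall>(a,b)\<in>uf_rel T lams Bs j. 0 < a \<and> 0 < b"
  unfolding uf_rel_def lab2_def by auto

abbreviation "L \<equiv> lab3 T lams Bs r"

lemma L_prop:
  assumes t: "t \<in> T" "dim_cell t = j" "j \<in> {1,2}"
  shows "(0 < L t \<longleftrightarrow> 0 < tau t) \<and> (0 < L t \<longrightarrow> g j (L t) = tau t)"
proof (cases "\<exists>k<length Bs. t \<in> Bs ! k \<and> 0 < lams k t")
  case True
  let ?k = "SOME k. k < length Bs \<and> t \<in> Bs ! k \<and> 0 < lams k t"
  have k: "?k < length Bs" "t \<in> Bs ! ?k" "0 < lams ?k t" using someI_ex[OF True] by auto
  let ?x = "lab2 T lams Bs ?k t"
  have Lt: "L t = r j ?x" unfolding lab3_def using True t by simp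
  have xp: "0 < ?x" using k by (simp add: lab2_def)
  have E: "(?x, r j ?x) \<in> equiv_closure (uf_rel T lams Bs j)" using rep t(3) unfolding is_set_rep_def by blast
  have "g j (r j ?x) = g j ?x" using eqcl_fun[OF E uf_fun[OF t(3)]] by simp
  also have "\<dots> = tau t" using g_prop[OF k(1,2) t(2,3) k(3)] .
  finally have g: "g j (L t) = tau t" using Lt by simp
  have "0 < L t" using eqcl_pos[OF E uf_pos xp] Lt by simp
  moreover have "0 < tau t" using Qj[OF k(1,2) t(2,3)] k(3) by simp
  ultimately show ?thesis using g by simp
next
  case False
  have L0: "L t = 0" unfolding lab3_def using False by (rule if_not_P)
  obtain k where k: "k < length Bs" "t \<in> Bs ! k" using cover t(1) by blast
  have "tau t = 0" using Qj[OF k t(2,3)] False k by auto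
  thus ?thesis using L0 by simp
qed

lemma face_img:
  assumes u: "u \<in> T" "dim_cell u = 1"
  shows "{tau s | s. s \<in> Gamma T u \<and> 0 < tau s} = g 2 ` face_labels T L u"
proof -
  have sp: "\<And>s. s \<in> Gamma T u \<Longrightarrow> (0 < L s \<longleftrightarrow> 0 < tau s) \<and> (0 < L s \<longrightarrow> g 2 (L s) = tau s)"
    using L_prop Gamma_in Gamma_dim u by (metis insert_iff one_add_one)
  show ?thesis unfolding face_labels_def
  proof
    show "{tau s |s. s \<in> Gamma T u \<and> 0 < tau s} \<subseteq> g 2 ` {L s |s. s \<in> Gamma T u \<and> 0 < L s}"
    proof clarify
      fix s assume s: "s \<in> Gamma T u" "0 < tau s"
      hence "0 < L s" "g 2 (L s) = tau s" using sp by auto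
      hence "L s \<in> {L s |s. s \<in> Gamma T u \<and> 0 < L s}" using s by blast
      thus "tau s \<in> g 2 ` {L s |s. s \<in> Gamma T u \<and> 0 < L s}" using \<open>g 2 (L s) = tau s\<close> by (intro image_eqI[of _ "g 2" "L s"]) simp_all
    qed
  next
    show "g 2 ` {L s |s. s \<in> Gamma T u \<and> 0 < L s} \<subseteq> {tau s |s. s \<in> Gamma T u \<and> 0 < tau s}"
    proof clarify
      fix s assume s: "s \<in> Gamma T u" "0 < L s"
      hence "0 < tau s" "g 2 (L s) = tau s" using sp by auto
      thus "\<exists>s'. g 2 (L s) = tau s' \<and> s' \<in> Gamma T u \<and> 0 < tau s'" using s by blast
    qed
  qed
qed

lemma merge_sound:
  assumes t0: "t0 \<in> T" "dim_cell t0 = 0" and uv: "u \<in> Gamma T t0" "v \<in> Gamma T t0"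
    and p: "0 < L u" "0 < L v" and fl: "face_labels T L u = face_labels T L v"
  shows "tau u = tau v"
proof -
  have uT: "u \<in> T" "dim_cell u = 1" "v \<in> T" "dim_cell v = 1"
    using uv Gamma_in Gamma_dim t0 by auto
  have tp: "0 < tau u" "0 < tau v" using L_prop[of u 1] L_prop[of v 1] uT p by auto
  have th: "theta T tau u \<noteq> {}" "theta T tau v \<noteq> {}"
    using LABEL_pos[OF Lt, of u 1] LABEL_pos[OF Lt, of v 1] uT tp by auto
  have "theta T tau u = theta T tau v"
    using theta1_eq[OF uT(1,2) th(1)] theta1_eq[OF uT(3,4) th(2)] face_img[OF uT(1,2)] face_img[OF uT(3,4)] fl
    by simp
  moreover have a: "u \<in> active_cells T tau T 1" "v \<in> active_cells T tau T 1"
    using uT th by (auto simp: active_cells_def)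
  moreover have "cell_conn T u v" unfolding cell_conn_def using uv t0 by blast
  ultimately have "same_class T tau T 1 u v" unfolding same_class_def
    by (auto intro!: r_into_rtranclp)
  thus ?thesis using LABEL_same[OF Lt _ a] by simp
qed

end



lemma obox_tgrid: "obox (tgrid n1 n2 n3)"
  unfolding obox_def tgrid_def
  apply (rule exI[of _ 1], rule exI[of _ "2 * int n1 - 1"], rule exI[of _ 1], rule exI[of _ "2 * int n2 - 1"],
         rule exI[of _ 1], rule exI[of _ "2 * int n3 - 1"])
  by presburger

lemma vc_bounds:
  assumes "valid_cuts N c" "i < length c"
  shows "1 \<le> c ! i" "c ! i \<le> N" "odd (c ! i)"
proof -
  have s: "sorted_wrt (<) c" and l: "2 \<le> length c" and h: "hd c = 1" and la: "last c = N"
    and o: "\<forall>a\<in>set c. odd a" using assms(1) unfolding valid_cuts_def by auto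
  have ne: "c \<noteq> []" using l by auto
  have h0: "c ! 0 = 1" using h ne by (simp add: hd_conv_nth)
  have lN: "c ! (length c - 1) = N" using la ne by (simp add: last_conv_nth)
  show "1 \<le> c ! i"
  proof (cases "i = 0")
    case True thus ?thesis using h0 by simp
  next
    case False thus ?thesis using sorted_wrt_nth_less[OF s, of 0 i] assms(2) h0 by auto
  qed
  show "c ! i \<le> N"
  proof (cases "i = length c - 1")
    case True thus ?thesis using lN by simp
  next
    case False
    hence "i < length c - 1" using assms(2) by simp
    moreover have "length c - 1 < length c" using l by simp
    ultimately show ?thesis using sorted_wrt_nth_less[OF s, of i "length c - 1"] lN by simp
  qed
  show "odd (c ! i)" using o assms(2) by auto
qed

lemma vc_cover:
  assumes "valid_cuts N c" "1 \<le> x" "x \<le> N"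
  shows "\<exists>k. 0 < k \<and> k < length c \<and> c ! (k - 1) \<le> x \<and> x \<le> c ! k"
proof -
  have s: "sorted_wrt (<) c" and l: "2 \<le> length c" and h: "hd c = 1" and la: "last c = N"
    using assms(1) unfolding valid_cuts_def by auto
  have ne: "c \<noteq> []" using l by auto
  have h0: "c ! 0 = 1" using h ne by (simp add: hd_conv_nth)
  have lN: "c ! (length c - 1) = N" using la ne by (simp add: last_conv_nth)
  define k0 where "k0 = (LEAST k. x \<le> c ! k)"
  have P: "x \<le> c ! k0" unfolding k0_def by (rule LeastI[of _ "length c - 1"]) (use lN assms in simp)
  have k0l: "k0 \<le> length c - 1" unfolding k0_def by (rule Least_le) (use lN assms in simp)
  show ?thesis
  proof (cases "k0 = 0")
    case True
    have "x = 1" using P True h0 assms(2) by simp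
    moreover have "1 < c ! 1" using sorted_wrt_nth_less[OF s, of 0 1] l h0 by auto
    ultimately show ?thesis using h0 l by (intro exI[of _ 1]) auto
  next
    case False
    have "\<not> x \<le> c ! (k0 - 1)" unfolding k0_def by (rule not_less_Least) (use False k0_def in simp)
    thus ?thesis using False P k0l l by (intro exI[of _ k0]) auto
  qed
qed

lemma block_props:
  assumes c: "valid_cuts (2 * int n1 - 1) c1" "valid_cuts (2 * int n2 - 1) c2" "valid_cuts (2 * int n3 - 1) c3"
    and B: "B \<in> block_family c1 c2 c3"
  shows "obox B" "B \<subseteq> tgrid n1 n2 n3"
proof -
  obtain k1 k2 k3 where B: "B = {c1 ! (k1 - 1) .. c1 ! k1} \<times> {c2 ! (k2 - 1) .. c2 ! k2} \<times> {c3 ! (k3 - 1) .. c3 ! k3}"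
    and k: "0 < k1" "k1 < length c1" "0 < k2" "k2 < length c2" "0 < k3" "k3 < length c3"
    using B unfolding block_family_def mem_Collect_eq by (elim exE conjE) blast
  have k': "k1 - 1 < length c1" "k2 - 1 < length c2" "k3 - 1 < length c3" using k by auto
  note b1 = vc_bounds[OF c(1) k(2)] vc_bounds[OF c(1) k'(1)]
  note b2 = vc_bounds[OF c(2) k(4)] vc_bounds[OF c(2) k'(2)]
  note b3 = vc_bounds[OF c(3) k(6)] vc_bounds[OF c(3) k'(3)]
  show "obox B" unfolding obox_def B
    apply (rule exI[of _ "c1 ! (k1 - 1)"], rule exI[of _ "c1 ! k1"], rule exI[of _ "c2 ! (k2 - 1)"], rule exI[of _ "c2 ! k2"],
         rule exI[of _ "c3 ! (k3 - 1)"], rule exI[of _ "c3 ! k3"])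
    using b1 b2 b3 by simp
  show "B \<subseteq> tgrid n1 n2 n3" unfolding B tgrid_def using b1 b2 b3 by auto
qed

lemma block_cover:
  assumes c: "valid_cuts (2 * int n1 - 1) c1" "valid_cuts (2 * int n2 - 1) c2" "valid_cuts (2 * int n3 - 1) c3"
    and t: "t \<in> tgrid n1 n2 n3"
  shows "\<exists>B\<in>block_family c1 c2 c3. t \<in> B"
proof -
  obtain x y z where tx: "t = (x,y,z)" by (cases t) auto
  have r: "1 \<le> x" "x \<le> 2 * int n1 - 1" "1 \<le> y" "y \<le> 2 * int n2 - 1" "1 \<le> z" "z \<le> 2 * int n3 - 1"
    using t tx unfolding tgrid_def by simp_all
  obtain k1 where k1: "0 < k1" "k1 < length c1" "c1 ! (k1 - 1) \<le> x" "x \<le> c1 ! k1" using vc_cover[OF c(1) r(1,2)] by blast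
  obtain k2 where k2: "0 < k2" "k2 < length c2" "c2 ! (k2 - 1) \<le> y" "y \<le> c2 ! k2" using vc_cover[OF c(2) r(3,4)] by blast
  obtain k3 where k3: "0 < k3" "k3 < length c3" "c3 ! (k3 - 1) \<le> z" "z \<le> c3 ! k3" using vc_cover[OF c(3) r(5,6)] by blast
  let ?B = "{c1 ! (k1 - 1) .. c1 ! k1} \<times> {c2 ! (k2 - 1) .. c2 ! k2} \<times> {c3 ! (k3 - 1) .. c3 ! k3}"
  have "?B \<in> block_family c1 c2 c3" unfolding block_family_def
    apply (rule CollectI, rule exI[of _ k1], rule exI[of _ k2], rule exI[of _ k3], rule conjI[OF refl])
    using k1 k2 k3 by simp
  moreover have "t \<in> ?B" unfolding tx using k1(3,4) k2(3,4) k3(3,4) by simp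
  ultimately show ?thesis by (rule bexI[rotated])
qed



lemma pos3_lemma:
  assumes seg: "segment_label_map (grid n1 n2 n3) \<sigma>" and L: "is_LABEL (tgrid n1 n2 n3) \<sigma> (tgrid n1 n2 n3) tau"
  shows "\<forall>w\<in>tgrid n1 n2 n3. dim_cell w = 3 \<longrightarrow> 0 < tau w"
proof (intro ballI impI)
  fix w assume w: "w \<in> tgrid n1 n2 n3" "dim_cell w = 3"
  obtain a b c where we: "w = (a,b,c)" by (cases w) auto
  have r: "1 \<le> a" "a \<le> 2 * int n1 - 1" "1 \<le> b" "b \<le> 2 * int n2 - 1" "1 \<le> c" "c \<le> 2 * int n3 - 1"
    using w(1) we unfolding tgrid_def by simp_all
  have v: "voxel_of w = ((a+1) div 2, (b+1) div 2, (c+1) div 2)" using we by (simp add: voxel_of_def)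
  have "1 \<le> (a+1) div 2" "(a+1) div 2 \<le> int n1" "1 \<le> (b+1) div 2" "(b+1) div 2 \<le> int n2"
     "1 \<le> (c+1) div 2" "(c+1) div 2 \<le> int n3" using r by presburger+
  hence "voxel_of w \<in> grid n1 n2 n3" unfolding v grid_def by simp
  hence "1 \<le> \<sigma> (voxel_of w)" using seg unfolding segment_label_map_def by blast
  thus "0 < tau w" using LABEL_3[OF L w] by simp
qed

theorem proposition5:
  fixes n1 n2 n3 :: nat and \<sigma> tau tau' :: "cell \<Rightarrow> nat"
  assumes "1 \<le> n1" and "1 \<le> n2" and "1 \<le> n3"
    and "segment_label_map (grid n1 n2 n3) \<sigma>"
    and "is_LABEL (tgrid n1 n2 n3) \<sigma> (tgrid n1 n2 n3) tau"
    and "blockwise_output n1 n2 n3 \<sigma> tau'"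
  shows "\<forall>u\<in>tgrid n1 n2 n3. \<forall>v\<in>tgrid n1 n2 n3.
           dim_cell u = 1 \<and> dim_cell v = 1 \<and> tau' u = tau' v \<longrightarrow> tau u = tau v"
proof -
  let ?T = "tgrid n1 n2 n3"
  obtain c1 c2 c3 Bs lams r order r4 where
    c: "valid_cuts (2 * int n1 - 1) c1" "valid_cuts (2 * int n2 - 1) c2" "valid_cuts (2 * int n3 - 1) c3"
    and Bs: "set Bs = block_family c1 c2 c3"
    and lams: "\<forall>k<length Bs. is_LABEL ?T \<sigma> (Bs ! k) (lams k)"
    and rep: "\<forall>j\<in>{1, 2}. is_set_rep (equiv_closure (uf_rel ?T lams Bs j)) (r j)"
    and ord: "set order = {t \<in> ?T. dim_cell t = 0}"
    and r4: "is_set_rep (fold (\<lambda>t0 M. step4 ?T (lab3 ?T lams Bs r) M t0) order Id) r4"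
    and tau': "\<forall>u\<in>?T. dim_cell u = 1 \<longrightarrow> tau' u = r4 (lab3 ?T lams Bs r u)"
    using assms(6) unfolding blockwise_output_def Let_def by blast
  have bl: "\<forall>k<length Bs. obox (Bs!k) \<and> Bs!k \<subseteq> ?T \<and> is_LABEL ?T \<sigma> (Bs!k) (lams k)"
  proof (intro allI impI)
    fix k assume k: "k < length Bs"
    hence "Bs ! k \<in> block_family c1 c2 c3" using Bs nth_mem by blast
    thus "obox (Bs!k) \<and> Bs!k \<subseteq> ?T \<and> is_LABEL ?T \<sigma> (Bs!k) (lams k)"
      using block_props[OF c] lams k by blast
  qed
  have cover: "\<forall>t\<in>?T. \<exists>k<length Bs. t \<in> Bs!k"
  proof
    fix t assume "t \<in> ?T"
    then obtain B where B: "B \<in> set Bs" "t \<in> B" using block_cover[OF c] Bs by blast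
    then obtain k where "k < length Bs" "Bs ! k = B" by (metis in_set_conv_nth)
    thus "\<exists>k<length Bs. t \<in> Bs!k" using B by blast
  qed
  have mn: "main ?T \<sigma> tau Bs lams r"
    unfolding main_def main_axioms_def glob_def
    using obox_tgrid assms(5) pos3_lemma[OF assms(4,5)] bl cover rep by blast
  interpret M: main ?T \<sigma> tau Bs lams r by (rule mn)
  let ?L = "lab3 ?T lams Bs r"
  define H where "H x = (if x = 0 then 0 else M.g 1 x)" for x
  have HL: "\<And>u. u \<in> ?T \<Longrightarrow> dim_cell u = 1 \<Longrightarrow> H (?L u) = tau u"
  proof -
    fix u assume u: "u \<in> ?T" "dim_cell u = 1"
    show "H (?L u) = tau u" using M.L_prop[OF u, simplified] unfolding H_def by auto
  qed
  have step: "\<forall>(x,y)\<in>step4 ?T ?L M t0. H x = H y"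
    if M: "\<forall>(x,y)\<in>M. H x = H y" and t0: "t0 \<in> ?T" "dim_cell t0 = 0" for M t0
  proof -
    have mp: "\<forall>(x,y)\<in>merge_pairs ?T ?L M t0. H x = H y"
    proof clarify
      fix x y assume "(x,y) \<in> merge_pairs ?T ?L M t0"
      then obtain u v where uv: "x = ?L u" "y = ?L v" "once_in ?T ?L M t0 u" "once_in ?T ?L M t0 v"
        "face_labels ?T ?L u = face_labels ?T ?L v" unfolding merge_pairs_def by blast
      have g: "u \<in> Gamma ?T t0" "v \<in> Gamma ?T t0" "0 < ?L u" "0 < ?L v"
        using uv(3,4) unfolding once_in_def by auto
      have "tau u = tau v" using M.merge_sound[OF t0 g uv(5)] .
      moreover have "u \<in> ?T" "dim_cell u = 1" "v \<in> ?T" "dim_cell v = 1"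
        using g Gamma_in Gamma_dim t0 by auto
      ultimately show "H x = H y" using HL uv(1,2) by simp
    qed
    have "\<forall>(a,b)\<in>M \<union> merge_pairs ?T ?L M t0. H a = H b" using M mp by blast
    thus ?thesis unfolding step4_def using eqcl_fun[where f = H] by blast
  qed
  have inv: "\<And>xs M. set xs \<subseteq> {t \<in> ?T. dim_cell t = 0} \<Longrightarrow> \<forall>(x,y)\<in>M. H x = H y \<Longrightarrow>
     \<forall>(x,y)\<in>fold (\<lambda>t0 M. step4 ?T ?L M t0) xs M. H x = H y"
  proof -
    fix xs M
    show "set xs \<subseteq> {t \<in> ?T. dim_cell t = 0} \<Longrightarrow> \<forall>(x,y)\<in>M. H x = H y \<Longrightarrow>
     \<forall>(x,y)\<in>fold (\<lambda>t0 M. step4 ?T ?L M t0) xs M. H x = H y"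
    proof (induction xs arbitrary: M)
      case Nil thus ?case by simp
    next
      case (Cons t0 xs)
      have t0: "t0 \<in> ?T" "dim_cell t0 = 0" using Cons.prems(1) by auto
      have "\<forall>(x,y)\<in>step4 ?T ?L M t0. H x = H y" using step[OF Cons.prems(2) t0] .
      thus ?case using Cons.IH[of "step4 ?T ?L M t0"] Cons.prems(1) by simp
    qed
  qed
  have fin: "\<forall>(x,y)\<in>fold (\<lambda>t0 M. step4 ?T ?L M t0) order Id. H x = H y"
    using inv[of order Id] ord by auto
  have Hr: "\<And>x. H (r4 x) = H x"
  proof -
    fix x
    have "(x, r4 x) \<in> fold (\<lambda>t0 M. step4 ?T ?L M t0) order Id" using r4 unfolding is_set_rep_def by blast
    thus "H (r4 x) = H x" using fin by auto
  qed
  show ?thesis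
  proof (intro ballI impI)
    fix u v assume u: "u \<in> ?T" "v \<in> ?T" and d: "dim_cell u = 1 \<and> dim_cell v = 1 \<and> tau' u = tau' v"
    have "r4 (?L u) = r4 (?L v)" using tau' u d by auto
    hence "H (?L u) = H (?L v)" using Hr by metis
    thus "tau u = tau v" using HL u d by auto
  qed
qed


end
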